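(* Let $n\ge1$, and let $\tau^1,\dots,\tau^n$, $\eta^{\{1,\dots,n\}}$, $\Lambda^{\mathcal J}$ be as in the context. For all $t,t_1,\dots,t_n\ge0$ with $\min(t_1,\dots,t_n)\ge t$, $$ \mathbb P(\tau^1>t_1,\dots,\tau^n>t_n\mid\mathcal F_t)=\exp\left\{-\sum_{\substack{\mathcal J\subseteq\{1,\dots,n\}\\ \mathcal J\neq\emptyset}}\ \sum_{\mathcal I\subseteq\mathcal J}(-1)^{|\mathcal J|-|\mathcal I|+1}\Lambda^{\mathcal I^c}_{\max\{t_i:\,i\in\mathcal J\}}\right\}\eta^{\{1,\dots,n\}}_t, $$ where $\mathcal I^c:=\{1,\dots,n\}\setminus\mathcal I$ and $\Lambda^\emptyset\equiv0$.
   Context: Let $(\Omega,\mathcal G,\mathbb F,\mathbb P)$ be a filtered probability space, $\mathbb F=(\mathcal F_t)_{t\ge0}$ satisfying the usual conditions. For $i=1,\dots,n$, let $K^i$ be an $\mathbb F$-adapted, càdlàg, increasing process with $K^i_0=0$ (possibly dependent across $i$), and let $\Theta^1,\dots,\Theta^n$ be unit exponential random variables, mutually independent and independent of $\mathcal F_\infty$. Define $\tau^i:=\inf\{t\ge0:K^i_t\ge\Theta^i\}$. For nonempty $\mathcal J\subseteq\{1,\dots,n\}$ let $K^{\mathcal J}:=\sum_{j\in\mathcal J}K^j$; then $\mathbb P(\min_{j\in\mathcal J}\tau^j>t\mid\mathcal F_t)=e^{-K^{\mathcal J}_t}$. Let $K^{\mathcal J,c}$ be the continuous part of $K^{\mathcal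 J}$, let $I^{\mathcal J}_t:=\sum_{s\le t}(1-e^{-\Delta K^{\mathcal J}_s})$ with canonical decomposition $I^{\mathcal J}=M^{I^{\mathcal J}}+A^{I^{\mathcal J}}$ ($M^{I^{\mathcal J}}$ an $\mathbb F$-local martingale, $A^{I^{\mathcal J}}$ $\mathbb F$-predictable of finite variation), and set $\Lambda^{\mathcal J}:=K^{\mathcal J,c}+A^{I^{\mathcal J}}$; set $\Lambda^\emptyset:=0$. Standing assumptions: for every nonempty $\mathcal J$, $K^{\mathcal J,c}$ and $A^{I^{\mathcal J}}$ are deterministic, $\Lambda^{\mathcal J}$ is continuous (as holds when the associated random times are totally inaccessible), and $e^{-K^{\mathcal J}_t}=\eta^{\mathcal J}_t e^{-\Lambda^{\mathcal J}_t}$ with $\eta^{\mathcal J}$ a nonnegative $\mathbb F$-martingale, $\eta^{\mathcal J}_0=1$. *)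

theory Defs
  imports "HOL-Probability.Probability"
begin

definition usual_filtration :: "'a measure \<Rightarrow> (real \<Rightarrow> 'a measure) \<Rightarrow> bool" where
  "usual_filtration M F \<longleftrightarrow>
     (\<forall>t\<ge>0. subalgebra M (F t)) \<and>
     (\<forall>s t. 0 \<le> s \<longrightarrow> s \<le> t \<longrightarrow> sets (F s) \<subseteq> sets (F t)) \<and>
     (\<forall>t\<ge>0. sets (F t) = (\<Inter>s\<in>{t<..}. sets (F s))) \<and>
     (\<forall>N. (\<exists>A\<in>null_sets M. N \<subseteq> A) \<longrightarrow> N \<in> sets (F 0))"

definition filtration_infty :: "'a measure \<Rightarrow> (real \<Rightarrow> 'a measure) \<Rightarrow> 'a measure" where
  "filtration_infty M F = sigma (space M) (\<Union>t\<in>{0..}. sets (F t))"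

definition adapted_proc :: "(real \<Rightarrow> 'a measure) \<Rightarrow> (real \<Rightarrow> 'a \<Rightarrow> real) \<Rightarrow> bool" where
  "adapted_proc F X \<longleftrightarrow> (\<forall>t\<ge>0. X t \<in> borel_measurable (F t))"

definition cadlag :: "(real \<Rightarrow> real) \<Rightarrow> bool" where
  "cadlag f \<longleftrightarrow> (\<forall>t\<ge>0. (f \<longlongrightarrow> f t) (at_right t)) \<and>
                (\<forall>t>0. \<exists>l. (f \<longlongrightarrow> l) (at_left t))"

definition martingale :: "'a measure \<Rightarrow> (real \<Rightarrow> 'a measure) \<Rightarrow> (real \<Rightarrow> 'a \<Rightarrow> real) \<Rightarrow> bool" where
  "martingale M F X \<longleftrightarrow> adapted_proc F X \<and> (\<forall>t\<ge>0. integrable M (X t)) \<and>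
     (\<forall>s t. 0 \<le> s \<longrightarrow> s \<le> t \<longrightarrow> (AE \<omega> in M. real_cond_exp M (F s) (X t) \<omega> = X s \<omega>))"

text \<open>tau^i = inf {t >= 0 : K^i_t >= Theta^i}, valued in [0,oo] (inf of empty set = oo).\<close>
definition hitting_time :: "(real \<Rightarrow> 'a \<Rightarrow> real) \<Rightarrow> ('a \<Rightarrow> real) \<Rightarrow> 'a \<Rightarrow> ereal" where
  "hitting_time K \<Theta> \<omega> = Inf {ereal t | t. 0 \<le> t \<and> \<Theta> \<omega> \<le> K t \<omega>}"

end

theory Submission
  imports Defs
begin

lemma altsum:
  assumes "finite N" "I \<subseteq> N"
  shows "(\<Sum>J | J \<subseteq> N \<and> I \<subseteq> J. (-1::real) ^ (card J - card I)) = (if I = N then 1 else 0)"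
proof (cases "I = N")
  case True
  then have "{J. J \<subseteq> N \<and> I \<subseteq> J} = {N}" by auto
  then show ?thesis using True by simp
next
  case False
  then have ps: "I \<subset> N" using assms by auto
  have fin: "finite {J. J \<subseteq> N \<and> I \<subseteq> J}" using assms(1) by (simp add: finite_subset[of _ "Pow N"] subset_iff)
  have eq: "(-1::real) ^ (card J - card I) = (-1) ^ card I * (-1) ^ card J" if "J \<subseteq> N" "I \<subseteq> J" for J
  proof -
    have "card I \<le> card J" using that assms by (meson card_mono finite_subset)
    then have "(-1::real) ^ card J = (-1) ^ (card J - card I) * (-1) ^ card I"
      by (metis le_add_diff_inverse2 power_add)
    then have "(-1::real) ^ card I * (-1) ^ card J = (-1) ^ (card J - card I) * ((-1) ^ card I * (-1) ^ card I)"
      by simp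
    also have "(-1::real) ^ card I * (-1) ^ card I = 1" by (simp flip: power_add)
    finally show ?thesis by simp
  qed
  have "(\<Sum>J | J \<subseteq> N \<and> I \<subseteq> J. (-1::real) ^ (card J - card I)) = (-1) ^ card I * (\<Sum>J | J \<subseteq> N \<and> I \<subseteq> J. (-1::real) ^ card J)"
    by (simp add: sum_distrib_left eq)
  also have "(\<Sum>J | J \<subseteq> N \<and> I \<subseteq> J. (-1::real) ^ card J) = 0"
    apply (rule sum_alternating_cancels[OF fin])
    using card_subsupersets_even_odd[OF assms(1) ps] by (simp add: conj_assoc)
  finally show ?thesis using False by simp
qed

lemma swapsum:
  fixes g :: "nat set \<Rightarrow> real"
  assumes "finite N" "\<And>J. J \<in> JJ \<Longrightarrow> J \<subseteq> N"
  shows "(\<Sum>J\<in>JJ. \<Sum>I\<in>Pow J. (-1) ^ (card J - card I + 1) * g I)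
       = (\<Sum>I\<in>Pow N. g I * (- (\<Sum>J | J \<in> JJ \<and> I \<subseteq> J. (-1::real) ^ (card J - card I))))"
proof -
  have finJ: "finite JJ" using assms by (meson finite_Pow_iff finite_subset subsetI PowI)
  have "(\<Sum>J\<in>JJ. \<Sum>I\<in>Pow J. (-1) ^ (card J - card I + 1) * g I)
      = (\<Sum>J\<in>JJ. \<Sum>I | I \<in> Pow N \<and> I \<subseteq> J. (-1) ^ (card J - card I + 1) * g I)"
    apply (rule sum.cong[OF refl])
    apply (rule sum.cong)
    using assms(2) by auto
  also have "\<dots> = (\<Sum>I\<in>Pow N. \<Sum>J | J \<in> JJ \<and> I \<subseteq> J. (-1) ^ (card J - card I + 1) * g I)"
    by (rule sum.swap_restrict) (use finJ assms in auto)
  also have "\<dots> = (\<Sum>I\<in>Pow N. g I * (- (\<Sum>J | J \<in> JJ \<and> I \<subseteq> J. (-1::real) ^ (card J - card I))))"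
    by (simp add: sum_distrib_left sum_negf algebra_simps)
  finally show ?thesis .
qed

definition frm :: "nat set \<Rightarrow> (nat set \<Rightarrow> real \<Rightarrow> real) \<Rightarrow> (nat \<Rightarrow> real) \<Rightarrow> real" where
  "frm N L T = (\<Sum>J\<in>{J. J \<subseteq> N \<and> J \<noteq> {}}. \<Sum>I\<in>Pow J.
          (-1) ^ (card J - card I + 1) * L (N - I) (Max (T ` J)))"

lemma frm_base:
  assumes "finite N" "N \<noteq> {}" "L {} = (\<lambda>s. 0)" "\<And>i. i \<in> N \<Longrightarrow> T i = c"
  shows "frm N L T = L N c"
proof -
  have mx: "Max (T ` J) = c" if "J \<subseteq> N" "J \<noteq> {}" for J
  proof -
    have "T ` J = {c}" using that assms(4) by auto
    then show ?thesis by simp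
  qed
  have "frm N L T = (\<Sum>J\<in>{J. J \<subseteq> N \<and> J \<noteq> {}}. \<Sum>I\<in>Pow J. (-1) ^ (card J - card I + 1) * L (N - I) c)"
    unfolding frm_def by (intro sum.cong refl) (simp add: mx)
  also have "\<dots> = (\<Sum>I\<in>Pow N. L (N - I) c * (- (\<Sum>J | J \<in> {J. J \<subseteq> N \<and> J \<noteq> {}} \<and> I \<subseteq> J. (-1::real) ^ (card J - card I))))"
    by (rule swapsum[OF assms(1)]) auto
  also have "\<dots> = (\<Sum>I\<in>Pow N. if I = {} then L N c else 0)"
  proof (rule sum.cong[OF refl])
    fix I assume I: "I \<in> Pow N"
    show "L (N - I) c * (- (\<Sum>J | J \<in> {J. J \<subseteq> N \<and> J \<noteq> {}} \<and> I \<subseteq> J. (-1::real) ^ (card J - card I))) = (if I = {} then L N c else 0)"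
    proof (cases "I = {}")
      case True
      have fin: "finite {J. J \<subseteq> N}" using assms(1) by simp
      have "{J. J \<subseteq> N} = insert {} {J. J \<subseteq> N \<and> J \<noteq> {}}" by auto
      then have "(\<Sum>J | J \<subseteq> N. (-1::real) ^ card J) = 1 + (\<Sum>J | J \<subseteq> N \<and> J \<noteq> {}. (-1::real) ^ card J)"
        using fin by (simp add: sum.insert_remove)
      moreover have "(\<Sum>J | J \<subseteq> N. (-1::real) ^ card J) = 0"
        using altsum[OF assms(1), of "{}"] assms(2) by simp
      ultimately have "(\<Sum>J | J \<subseteq> N \<and> J \<noteq> {}. (-1::real) ^ card J) = -1" by linarith
      then show ?thesis using True by simp
    next
      case False
      have "{J. J \<in> {J. J \<subseteq> N \<and> J \<noteq> {}} \<and> I \<subseteq> J} = {J. J \<subseteq> N \<and> I \<subseteq> J}" using False by auto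
      then show ?thesis using altsum[OF assms(1), of I] I False assms(3) by auto
    qed
  qed
  also have "\<dots> = L N c" using assms(1) by (simp add: sum.delta)
  finally show ?thesis .
qed

lemma frm_step:
  assumes "finite N" "S \<subseteq> N" "S \<noteq> {}" "L {} = (\<lambda>s. 0)"
    and "\<And>i. i \<in> S \<Longrightarrow> T i = m" and "\<And>i. i \<in> N - S \<Longrightarrow> T i \<le> c" and "c \<le> m"
  shows "frm N L T = frm N L (\<lambda>i. if i \<in> S then c else T i) + (L S m - L S c)"
proof -
  define T' where "T' = (\<lambda>i. if i \<in> S then c else T i)"
  define mu where "mu = (\<lambda>U. L U m - L U c)"
  let ?JJ = "{J. J \<subseteq> N \<and> J \<noteq> {}}"
  let ?KK = "{J. J \<subseteq> N \<and> J \<inter> S \<noteq> {}}"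
  have finJ: "finite ?JJ" using assms(1) by auto
  have d: "frm N L T - frm N L T' = (\<Sum>J\<in>?JJ. \<Sum>I\<in>Pow J.
          (-1) ^ (card J - card I + 1) * (L (N - I) (Max (T ` J)) - L (N - I) (Max (T' ` J))))"
    by (simp only: frm_def sum_subtractf[symmetric] right_diff_distrib)
  also have "\<dots> = (\<Sum>J\<in>?JJ. if J \<inter> S \<noteq> {} then (\<Sum>I\<in>Pow J. (-1) ^ (card J - card I + 1) * mu (N - I)) else 0)"
  proof (rule sum.cong[OF refl])
    fix J assume J: "J \<in> ?JJ"
    show "(\<Sum>I\<in>Pow J. (-1) ^ (card J - card I + 1) * (L (N - I) (Max (T ` J)) - L (N - I) (Max (T' ` J))))
        = (if J \<inter> S \<noteq> {} then (\<Sum>I\<in>Pow J. (-1) ^ (card J - card I + 1) * mu (N - I)) else 0)"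
    proof (cases "J \<inter> S = {}")
      case True
      then have "T ` J = T' ` J" unfolding T'_def by (auto simp: image_def)
      then show ?thesis using True by simp
    next
      case False
      have fJ: "finite J" using J assms(1) finite_subset by auto
      have m1: "Max (T ` J) = m"
      proof (rule Max_eqI)
        show "finite (T ` J)" using fJ by simp
        show "y \<le> m" if "y \<in> T ` J" for y using that J assms(5,6,7) by fastforce
        show "m \<in> T ` J" using False assms(5) by force
      qed
      have m2: "Max (T' ` J) = c"
      proof (rule Max_eqI)
        show "finite (T' ` J)" using fJ by simp
        show "y \<le> c" if yJ: "y \<in> T' ` J" for y 
        proof -
          obtain i where i: "i \<in> J" "y = T' i" using yJ by auto
          show ?thesis
          proof (cases "i \<in> S")
            case True then show ?thesis using i unfolding T'_def by simp
          next
            case False then have "i \<in> N - S" using i J by auto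
            then show ?thesis using i assms(6) False unfolding T'_def by simp
          qed
        qed
        show "c \<in> T' ` J" using False unfolding T'_def by force
      qed
      show ?thesis using False by (simp add: m1 m2 mu_def)
    qed
  qed
  also have "\<dots> = (\<Sum>J\<in>?KK. \<Sum>I\<in>Pow J. (-1) ^ (card J - card I + 1) * mu (N - I))"
    by (subst sum.If_cases[OF finJ]) (auto intro!: sum.cong)
  also have "\<dots> = (\<Sum>I\<in>Pow N. mu (N - I) * (- (\<Sum>J | J \<in> ?KK \<and> I \<subseteq> J. (-1::real) ^ (card J - card I))))"
    by (rule swapsum[OF assms(1)]) auto
  also have "\<dots> = (\<Sum>I\<in>Pow N. (if I = N - S then mu (N - I) else 0) - (if I = N then mu (N - I) else 0))"
  proof (rule sum.cong[OF refl])
    fix I assume I: "I \<in> Pow N"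
    have fin1: "finite {J. J \<subseteq> N \<and> I \<subseteq> J}" using assms(1) by (simp add: finite_subset[of _ "Pow N"] subset_iff)
    have "{J. J \<subseteq> N \<and> I \<subseteq> J} = {J. J \<in> ?KK \<and> I \<subseteq> J} \<union> {J. J \<subseteq> N - S \<and> I \<subseteq> J}" by auto
    then have "(\<Sum>J | J \<subseteq> N \<and> I \<subseteq> J. (-1::real) ^ (card J - card I))
      = (\<Sum>J | J \<in> ?KK \<and> I \<subseteq> J. (-1::real) ^ (card J - card I)) + (\<Sum>J | J \<subseteq> N - S \<and> I \<subseteq> J. (-1::real) ^ (card J - card I))"
      apply simp
      apply (rule sum.union_disjoint)
      using fin1 by (auto intro: finite_subset)
    moreover have "(\<Sum>J | J \<subseteq> N - S \<and> I \<subseteq> J. (-1::real) ^ (card J - card I)) = (if I = N - S then 1 else 0)"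
    proof (cases "I \<subseteq> N - S")
      case True
      then show ?thesis using altsum[of "N - S" I] assms(1) by auto
    next
      case False
      then have e: "{J. J \<subseteq> N - S \<and> I \<subseteq> J} = {}" by auto
      have "I \<noteq> N - S" using False by blast
      then show ?thesis by (simp only: e sum.empty if_False)
    qed
    moreover have "(\<Sum>J | J \<subseteq> N \<and> I \<subseteq> J. (-1::real) ^ (card J - card I)) = (if I = N then 1 else 0)"
      using altsum[OF assms(1), of I] I by auto
    ultimately have s1: "(\<Sum>J | J \<in> ?KK \<and> I \<subseteq> J. (-1::real) ^ (card J - card I))
       = (if I = N then 1 else 0) - (if I = N - S then 1 else 0)" by linarith
    show "mu (N - I) * (- (\<Sum>J | J \<in> ?KK \<and> I \<subseteq> J. (-1::real) ^ (card J - card I)))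
      = (if I = N - S then mu (N - I) else 0) - (if I = N then mu (N - I) else 0)"
      unfolding s1 by (cases "I = N"; cases "I = N - S") simp_all
  qed
  also have "\<dots> = mu S - mu {}"
    using assms(1,2) by (simp add: sum_subtractf sum.delta double_diff)
  also have "\<dots> = L S m - L S c" using assms(4) by (simp add: mu_def)
  finally show ?thesis unfolding T'_def by simp
qed




locale cs =
  fixes M :: "'a measure" and F :: "real \<Rightarrow> 'a measure" and n :: nat
    and K :: "nat \<Rightarrow> real \<Rightarrow> 'a \<Rightarrow> real" and \<Theta> :: "nat \<Rightarrow> 'a \<Rightarrow> real"
    and \<Lambda> :: "nat set \<Rightarrow> real \<Rightarrow> real" and \<eta> :: "nat set \<Rightarrow> real \<Rightarrow> 'a \<Rightarrow> real"
  assumes PS: "prob_space M"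
    and UF: "usual_filtration M F"
    and n1: "n \<ge> 1"
    and K_adapted: "\<forall>i\<in>{1..n}. adapted_proc F (K i)"
    and K_cadlag: "\<forall>i\<in>{1..n}. \<forall>\<omega>\<in>space M. cadlag (\<lambda>s. K i s \<omega>)"
    and K_mono: "\<forall>i\<in>{1..n}. \<forall>\<omega>\<in>space M. mono_on {0..} (\<lambda>s. K i s \<omega>)"
    and K_zero: "\<forall>i\<in>{1..n}. \<forall>\<omega>\<in>space M. K i 0 \<omega> = 0"
    and Theta_exp: "\<forall>i\<in>{1..n}. distributed M lborel (\<Theta> i) (exponential_density 1)"
    and Theta_indep: "prob_space.indep_sets M
        (\<lambda>j. case j of None \<Rightarrow> sets (filtration_infty M F)
                | Some i \<Rightarrow> {\<Theta> i -` B \<inter> space M | B. B \<in> sets borel})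
        (insert None (Some ` {1..n}))"
    and Lambda_empty: "\<forall>s. \<Lambda> {} s = 0"
    and eta_fact: "\<forall>J. J \<subseteq> {1..n} \<longrightarrow> J \<noteq> {} \<longrightarrow> (\<forall>s\<ge>0. \<forall>\<omega>\<in>space M.
        exp (- (\<Sum>j\<in>J. K j s \<omega>)) = \<eta> J s \<omega> * exp (- \<Lambda> J s))"
    and eta_mart: "\<forall>J. J \<subseteq> {1..n} \<longrightarrow> J \<noteq> {} \<longrightarrow>
        martingale M F (\<eta> J) \<and> (\<forall>s\<ge>0. \<forall>\<omega>\<in>space M. \<eta> J s \<omega> \<ge> 0) \<and>
        (\<forall>\<omega>\<in>space M. \<eta> J 0 \<omega> = 1)"
begin

sublocale prob_space M by (rule PS)

abbreviation "N \<equiv> {1..n}"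

lemma N_fin: "finite N" and N_ne: "N \<noteq> {}" using n1 by auto

lemma subalg: "0 \<le> s \<Longrightarrow> subalgebra M (F s)"
  using UF unfolding usual_filtration_def by blast

lemma F_mono: "0 \<le> u \<Longrightarrow> u \<le> s \<Longrightarrow> sets (F u) \<subseteq> sets (F s)"
  using UF unfolding usual_filtration_def by blast

lemma space_F: "0 \<le> s \<Longrightarrow> space (F s) = space M"
  using subalg unfolding subalgebra_def by auto

lemma sfs: "0 \<le> s \<Longrightarrow> sigma_finite_subalgebra M (F s)"
  by (rule finite_measure_subalgebra_is_sigma_finite)
     (simp add: finite_measure_subalgebra_def finite_measure_subalgebra_axioms_def subalg finite_measure_axioms)

lemma sub_FF: "0 \<le> u \<Longrightarrow> u \<le> s \<Longrightarrow> subalgebra (F s) (F u)"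
  using F_mono[of u s] space_F[of u] space_F[of s] unfolding subalgebra_def by simp

lemma Kmeas: "i \<in> N \<Longrightarrow> 0 \<le> u \<Longrightarrow> u \<le> s \<Longrightarrow> K i u \<in> borel_measurable (F s)"
  using K_adapted measurable_from_subalg[OF sub_FF] unfolding adapted_proc_def by blast

lemma KmeasM: "i \<in> N \<Longrightarrow> 0 \<le> u \<Longrightarrow> K i u \<in> borel_measurable M"
  using Kmeas[of i u u] measurable_from_subalg[OF subalg] by blast

lemma Kpos: "i \<in> N \<Longrightarrow> 0 \<le> u \<Longrightarrow> \<omega> \<in> space M \<Longrightarrow> 0 \<le> K i u \<omega>"
proof -
  assume a: "i \<in> N" "0 \<le> u" "\<omega> \<in> space M"
  have m: "mono_on {0..} (\<lambda>s. K i s \<omega>)" using K_mono a by blast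
  have "K i 0 \<omega> \<le> K i u \<omega>" by (rule mono_onD[OF m]) (use a in auto)
  moreover have "K i 0 \<omega> = 0" using K_zero a by blast
  ultimately show ?thesis by simp
qed

lemma eta_m: "J \<subseteq> N \<Longrightarrow> J \<noteq> {} \<Longrightarrow> martingale M F (\<eta> J)"
  using eta_mart by blast

lemma eta_measM: "J \<subseteq> N \<Longrightarrow> J \<noteq> {} \<Longrightarrow> 0 \<le> u \<Longrightarrow> \<eta> J u \<in> borel_measurable M"
proof -
  assume a: "J \<subseteq> N" "J \<noteq> {}" "0 \<le> u"
  have "\<eta> J u \<in> borel_measurable (F u)" using eta_m[OF a(1,2)] a(3) unfolding martingale_def adapted_proc_def by blast
  then show ?thesis using measurable_from_subalg[OF subalg[OF a(3)]] by blast
qed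

lemma eta_int: "J \<subseteq> N \<Longrightarrow> J \<noteq> {} \<Longrightarrow> 0 \<le> u \<Longrightarrow> integrable M (\<eta> J u)"
  using eta_m unfolding martingale_def by blast

lemma mart: "J \<subseteq> N \<Longrightarrow> J \<noteq> {} \<Longrightarrow> 0 \<le> s \<Longrightarrow> s \<le> u \<Longrightarrow>
   AE \<omega> in M. real_cond_exp M (F s) (\<eta> J u) \<omega> = \<eta> J s \<omega>"
  using eta_m unfolding martingale_def by blast

lemma intb: "f \<in> borel_measurable M \<Longrightarrow> (\<And>\<omega>. \<omega> \<in> space M \<Longrightarrow> \<bar>f \<omega>\<bar> \<le> (B::real)) \<Longrightarrow> integrable M f"
  by (rule integrable_const_bound[where B=B]) (simp_all add: AE_I2)

lemma expK_meas: "S \<subseteq> N \<Longrightarrow> (\<And>i. i \<in> S \<Longrightarrow> 0 \<le> T i \<and> T i \<le> s) \<Longrightarrow>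
   (\<lambda>\<omega>. exp (- (\<Sum>i\<in>S. K i (T i) \<omega>))) \<in> borel_measurable (F s)"
proof -
  assume a: "S \<subseteq> N" "\<And>i. i \<in> S \<Longrightarrow> 0 \<le> T i \<and> T i \<le> s"
  have "(\<lambda>\<omega>. - (\<Sum>i\<in>S. K i (T i) \<omega>)) \<in> borel_measurable (F s)"
    using a by (intro borel_measurable_uminus borel_measurable_sum) (blast intro: Kmeas)
  then show ?thesis by (rule measurable_compose[OF _ borel_measurable_exp])
qed

lemma expK_measM: "S \<subseteq> N \<Longrightarrow> (\<And>i. i \<in> S \<Longrightarrow> 0 \<le> T i) \<Longrightarrow>
   (\<lambda>\<omega>. exp (- (\<Sum>i\<in>S. K i (T i) \<omega>))) \<in> borel_measurable M"
proof -
  assume a: "S \<subseteq> N" "\<And>i. i \<in> S \<Longrightarrow> 0 \<le> T i"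
  have "(\<lambda>\<omega>. - (\<Sum>i\<in>S. K i (T i) \<omega>)) \<in> borel_measurable M"
    using a by (intro borel_measurable_uminus borel_measurable_sum) (blast intro: KmeasM)
  then show ?thesis by (rule measurable_compose[OF _ borel_measurable_exp])
qed

lemma expK_bd: "S \<subseteq> N \<Longrightarrow> (\<And>i. i \<in> S \<Longrightarrow> 0 \<le> T i) \<Longrightarrow> \<omega> \<in> space M \<Longrightarrow>
   \<bar>exp (- (\<Sum>i\<in>S. K i (T i) \<omega>))\<bar> \<le> 1"
proof -
  assume a: "S \<subseteq> N" "\<And>i. i \<in> S \<Longrightarrow> 0 \<le> T i" "\<omega> \<in> space M"
  have "0 \<le> (\<Sum>i\<in>S. K i (T i) \<omega>)" using a Kpos by (intro sum_nonneg) blast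
  then show ?thesis by simp
qed

lemma expK_int: "S \<subseteq> N \<Longrightarrow> (\<And>i. i \<in> S \<Longrightarrow> 0 \<le> T i) \<Longrightarrow>
   integrable M (\<lambda>\<omega>. exp (- (\<Sum>i\<in>S. K i (T i) \<omega>)))"
  by (rule intb[OF expK_measM expK_bd]) auto


lemma Lam_empty: "\<Lambda> {} = (\<lambda>s. 0)" using Lambda_empty by auto

lemma main_ind:
  "\<forall>T s. 0 \<le> s \<longrightarrow> (\<forall>i\<in>N. s \<le> T i) \<longrightarrow> card (T ` N) = Suc k \<longrightarrow>
    (AE \<omega> in M. real_cond_exp M (F s) (\<lambda>\<omega>. exp (- (\<Sum>i\<in>N. K i (T i) \<omega>))) \<omega>
       = exp (- frm N \<Lambda> T) * \<eta> N s \<omega>)"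
proof (induction k)
  case 0
  show ?case
  proof (intro allI impI)
    fix T :: "nat \<Rightarrow> real" and s :: real assume s: "0 \<le> s" and Ts: "\<forall>i\<in>N. s \<le> T i" and c1: "card (T ` N) = Suc 0"
    obtain c where Tc: "T ` N = {c}" using c1 by (metis One_nat_def card_1_singletonE)
    then have Ti: "\<And>i. i \<in> N \<Longrightarrow> T i = c" by auto
    have cs: "s \<le> c" using Ts Ti n1 by force
    interpret S: sigma_finite_subalgebra M "F s" using sfs[OF s] .
    have NN: "N \<subseteq> N" "N \<noteq> {}" using n1 by auto
    have eq: "AE \<omega> in M. exp (- (\<Sum>i\<in>N. K i (T i) \<omega>)) = exp (- \<Lambda> N c) * \<eta> N c \<omega>"
    proof (rule AE_I2)
      fix \<omega> assume w: "\<omega> \<in> space M"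
      have "exp (- (\<Sum>i\<in>N. K i (T i) \<omega>)) = exp (- (\<Sum>i\<in>N. K i c \<omega>))" using Ti by simp
      also have "\<dots> = \<eta> N c \<omega> * exp (- \<Lambda> N c)" using eta_fact NN s cs w by auto
      finally show "exp (- (\<Sum>i\<in>N. K i (T i) \<omega>)) = exp (- \<Lambda> N c) * \<eta> N c \<omega>" by simp
    qed
    have m1: "(\<lambda>\<omega>. exp (- (\<Sum>i\<in>N. K i (T i) \<omega>))) \<in> borel_measurable M"
    proof (rule expK_measM)
      fix i assume "i \<in> N"
      then have "s \<le> T i" using Ts by blast
      then show "0 \<le> T i" using s by linarith
    qed simp
    have m2: "(\<lambda>\<omega>. exp (- \<Lambda> N c) * \<eta> N c \<omega>) \<in> borel_measurable M"
      using eta_measM[OF NN] s cs by simp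
    have a1: "AE \<omega> in M. real_cond_exp M (F s) (\<lambda>\<omega>. exp (- (\<Sum>i\<in>N. K i (T i) \<omega>))) \<omega>
        = real_cond_exp M (F s) (\<lambda>\<omega>. exp (- \<Lambda> N c) * \<eta> N c \<omega>) \<omega>"
      by (rule S.real_cond_exp_cong[OF eq m1 m2])
    have a2: "AE \<omega> in M. real_cond_exp M (F s) (\<lambda>\<omega>. exp (- \<Lambda> N c) * \<eta> N c \<omega>) \<omega>
        = exp (- \<Lambda> N c) * real_cond_exp M (F s) (\<eta> N c) \<omega>"
      by (rule S.real_cond_exp_cmult) (use eta_int[OF NN] s cs in simp)
    have a3: "AE \<omega> in M. real_cond_exp M (F s) (\<eta> N c) \<omega> = \<eta> N s \<omega>"
      by (rule mart[OF NN s cs])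
    have fr: "frm N \<Lambda> T = \<Lambda> N c" using frm_base[where N=N and L=\<Lambda> and T=T and c=c] N_fin N_ne Lam_empty Ti by blast
    show "AE \<omega> in M. real_cond_exp M (F s) (\<lambda>\<omega>. exp (- (\<Sum>i\<in>N. K i (T i) \<omega>))) \<omega>
       = exp (- frm N \<Lambda> T) * \<eta> N s \<omega>"
      unfolding fr using a1 a2 a3 by eventually_elim simp
  qed
next
  case (Suc k)
  show ?case
  proof (intro allI impI)
    fix T :: "nat \<Rightarrow> real" and s :: real assume s: "0 \<le> s" and Ts: "\<forall>i\<in>N. s \<le> T i" and ck: "card (T ` N) = Suc (Suc k)"
    define Mx where "Mx = Max (T ` N)"
    define S where "S = {i\<in>N. T i = Mx}"
    define R where "R = T ` N - {Mx}"
    have finTN: "finite (T ` N)" by simp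
    have TNne: "T ` N \<noteq> {}" using n1 by auto
    have MxIn: "Mx \<in> T ` N" unfolding Mx_def using finTN TNne by (rule Max_in)
    have cardR: "card R = Suc k" unfolding R_def using ck MxIn finTN by simp
    have Rne: "R \<noteq> {}" using cardR by auto
    have finR: "finite R" unfolding R_def by simp
    define c where "c = Max R"
    have cR: "c \<in> R" unfolding c_def using finR Rne by (rule Max_in)
    have cTN: "c \<in> T ` N" and cM: "c \<noteq> Mx" using cR unfolding R_def by auto
    have cleM: "c \<le> Mx" unfolding Mx_def using cTN finTN by simp
    have Sne: "S \<noteq> {}" using MxIn unfolding S_def by auto
    have SN: "S \<subseteq> N" unfolding S_def by auto
    have le_c: "\<And>i. i \<in> N - S \<Longrightarrow> T i \<le> c"
    proof -
      fix i assume "i \<in> N - S"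
      then have "T i \<in> R" unfolding R_def S_def by auto
      then show "T i \<le> c" unfolding c_def using finR by simp
    qed
    have TS: "\<And>i. i \<in> S \<Longrightarrow> T i = Mx" unfolding S_def by auto
    have sc: "s \<le> c" using cTN Ts by auto
    have c0: "0 \<le> c" using s sc by simp
    have M0: "0 \<le> Mx" using c0 cleM by simp
    define T' where "T' = (\<lambda>i. if i \<in> S then c else T i)"
    have T'img: "T' ` N = R"
    proof
      show "T' ` N \<subseteq> R" using cR unfolding T'_def R_def S_def by auto
      show "R \<subseteq> T' ` N"
      proof
        fix v assume "v \<in> R"
        then obtain i where i: "i \<in> N" "v = T i" "T i \<noteq> Mx" unfolding R_def by auto
        then have "i \<notin> S" unfolding S_def by auto
        then show "v \<in> T' ` N" using i unfolding T'_def by force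
      qed
    qed
    have Ts': "\<forall>i\<in>N. s \<le> T' i" using Ts sc unfolding T'_def by auto
    have IH: "AE \<omega> in M. real_cond_exp M (F s) (\<lambda>\<omega>. exp (- (\<Sum>i\<in>N. K i (T' i) \<omega>))) \<omega>
       = exp (- frm N \<Lambda> T') * \<eta> N s \<omega>"
      using Suc.IH s Ts' cardR T'img by auto
    have frm_eq: "frm N \<Lambda> T = frm N \<Lambda> T' + (\<Lambda> S Mx - \<Lambda> S c)"
      unfolding T'_def using frm_step[where N=N and S=S and L=\<Lambda> and T=T and m=Mx and c=c] N_fin SN Sne Lam_empty TS le_c cleM by blast
    define X where "X = (\<lambda>\<omega>. exp (- (\<Sum>i\<in>N. K i (T i) \<omega>)))"
    define X' where "X' = (\<lambda>\<omega>. exp (- (\<Sum>i\<in>N. K i (T' i) \<omega>)))"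
    define Z where "Z = (\<lambda>\<omega>. exp (- (\<Sum>i\<in>N-S. K i (T i) \<omega>)))"
    define Y where "Y = (\<lambda>\<omega>. exp (- (\<Sum>i\<in>S. K i Mx \<omega>)))"
    have XZY: "X = (\<lambda>\<omega>. Z \<omega> * Y \<omega>)"
    proof
      fix \<omega>
      have "(\<Sum>i\<in>N. K i (T i) \<omega>) = (\<Sum>i\<in>N-S. K i (T i) \<omega>) + (\<Sum>i\<in>S. K i (T i) \<omega>)"
        by (rule sum.subset_diff[OF SN N_fin])
      also have "(\<Sum>i\<in>S. K i (T i) \<omega>) = (\<Sum>i\<in>S. K i Mx \<omega>)" using TS by simp
      finally show "X \<omega> = Z \<omega> * Y \<omega>" unfolding X_def Z_def Y_def by (simp add: exp_add[symmetric])
    qed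
    have X'Z: "\<And>\<omega>. X' \<omega> = Z \<omega> * exp (- (\<Sum>i\<in>S. K i c \<omega>))"
    proof -
      fix \<omega>
      have "(\<Sum>i\<in>N. K i (T' i) \<omega>) = (\<Sum>i\<in>N-S. K i (T' i) \<omega>) + (\<Sum>i\<in>S. K i (T' i) \<omega>)"
        by (rule sum.subset_diff[OF SN N_fin])
      also have "(\<Sum>i\<in>S. K i (T' i) \<omega>) = (\<Sum>i\<in>S. K i c \<omega>)" unfolding T'_def by simp
      also have "(\<Sum>i\<in>N-S. K i (T' i) \<omega>) = (\<Sum>i\<in>N-S. K i (T i) \<omega>)" unfolding T'_def by simp
      finally show "X' \<omega> = Z \<omega> * exp (- (\<Sum>i\<in>S. K i c \<omega>))" unfolding X'_def Z_def by (simp add: exp_add[symmetric])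
    qed
    interpret Sc: sigma_finite_subalgebra M "F c" using sfs[OF c0] .
    interpret Ss: sigma_finite_subalgebra M "F s" using sfs[OF s] .
    have T0: "\<And>i. i \<in> N \<Longrightarrow> 0 \<le> T i"
    proof -
      fix i assume "i \<in> N"
      then have "s \<le> T i" using Ts by blast
      then show "0 \<le> T i" using s by linarith
    qed
    have T'0: "\<And>i. i \<in> N \<Longrightarrow> 0 \<le> T' i"
    proof -
      fix i assume "i \<in> N"
      then have "s \<le> T' i" using Ts' by blast
      then show "0 \<le> T' i" using s by linarith
    qed
    have Zm: "Z \<in> borel_measurable (F c)" unfolding Z_def
      by (rule expK_meas) (use le_c T0 in auto)
    have ZmM: "Z \<in> borel_measurable M" unfolding Z_def
      by (rule expK_measM) (use T0 in auto)
    have Ym: "Y \<in> borel_measurable M" unfolding Y_def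
      using expK_measM[of S "\<lambda>i. Mx"] SN M0 by simp
    have Xm: "X \<in> borel_measurable M" unfolding X_def by (rule expK_measM) (use T0 in auto)
    have X'm: "X' \<in> borel_measurable M" unfolding X'_def by (rule expK_measM) (use T'0 in auto)
    have Xi: "integrable M X" unfolding X_def by (rule expK_int) (use T0 in auto)
    have X'i: "integrable M X'" unfolding X'_def by (rule expK_int) (use T'0 in auto)
    have ZYi: "integrable M (\<lambda>\<omega>. Z \<omega> * Y \<omega>)" using Xi XZY by simp
    have Yeta: "AE \<omega> in M. Y \<omega> = exp (- \<Lambda> S Mx) * \<eta> S Mx \<omega>"
    proof (rule AE_I2)
      fix \<omega> assume "\<omega> \<in> space M"
      then show "Y \<omega> = exp (- \<Lambda> S Mx) * \<eta> S Mx \<omega>" unfolding Y_def using eta_fact SN Sne M0 by auto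
    qed
    have etac: "AE \<omega> in M. \<eta> S c \<omega> = exp (- (\<Sum>i\<in>S. K i c \<omega>)) * exp (\<Lambda> S c)"
    proof (rule AE_I2)
      fix \<omega> assume "\<omega> \<in> space M"
      then have "exp (- (\<Sum>i\<in>S. K i c \<omega>)) = \<eta> S c \<omega> * exp (- \<Lambda> S c)" using eta_fact SN Sne c0 by auto
      then have "exp (- (\<Sum>i\<in>S. K i c \<omega>)) * exp (\<Lambda> S c) = \<eta> S c \<omega> * (exp (- \<Lambda> S c) * exp (\<Lambda> S c))" by simp
      also have "exp (- \<Lambda> S c) * exp (\<Lambda> S c) = 1" by (simp add: exp_minus field_simps)
      finally show "\<eta> S c \<omega> = exp (- (\<Sum>i\<in>S. K i c \<omega>)) * exp (\<Lambda> S c)" by simp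
    qed
    have b2: "AE \<omega> in M. real_cond_exp M (F c) (\<lambda>\<omega>. Z \<omega> * Y \<omega>) \<omega> = Z \<omega> * real_cond_exp M (F c) Y \<omega>"
      by (rule Sc.real_cond_exp_mult[OF Zm Ym ZYi])
    have b3: "AE \<omega> in M. real_cond_exp M (F c) Y \<omega> = real_cond_exp M (F c) (\<lambda>\<omega>. exp (- \<Lambda> S Mx) * \<eta> S Mx \<omega>) \<omega>"
      by (rule Sc.real_cond_exp_cong[OF Yeta Ym]) (use eta_measM[OF SN Sne M0] in simp)
    have b4: "AE \<omega> in M. real_cond_exp M (F c) (\<lambda>\<omega>. exp (- \<Lambda> S Mx) * \<eta> S Mx \<omega>) \<omega> = exp (- \<Lambda> S Mx) * real_cond_exp M (F c) (\<eta> S Mx) \<omega>"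
      by (rule Sc.real_cond_exp_cmult) (rule eta_int[OF SN Sne M0])
    have b5: "AE \<omega> in M. real_cond_exp M (F c) (\<eta> S Mx) \<omega> = \<eta> S c \<omega>"
      by (rule mart[OF SN Sne c0 cleM])
    define C where "C = exp (- (\<Lambda> S Mx - \<Lambda> S c))"
    have Cexp: "exp (- \<Lambda> S Mx) * exp (\<Lambda> S c) = C" unfolding C_def by (simp add: exp_add[symmetric])
    have b7: "AE \<omega> in M. real_cond_exp M (F c) X \<omega> = C * X' \<omega>"
      using b2 b3 b4 b5 etac
    proof eventually_elim
      case (elim \<omega>)
      have "real_cond_exp M (F c) X \<omega> = Z \<omega> * (exp (- \<Lambda> S Mx) * (exp (- (\<Sum>i\<in>S. K i c \<omega>)) * exp (\<Lambda> S c)))"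
        using elim XZY by simp
      also have "\<dots> = (exp (- \<Lambda> S Mx) * exp (\<Lambda> S c)) * (Z \<omega> * exp (- (\<Sum>i\<in>S. K i c \<omega>)))" by (simp add: algebra_simps)
      finally show ?case using Cexp X'Z by simp
    qed
    have b8: "AE \<omega> in M. real_cond_exp M (F s) (real_cond_exp M (F c) X) \<omega> = real_cond_exp M (F s) X \<omega>"
      by (rule Ss.real_cond_exp_nested_subalg[OF subalg[OF c0] sub_FF[OF s sc] Xi])
    have b9: "AE \<omega> in M. real_cond_exp M (F s) (real_cond_exp M (F c) X) \<omega> = real_cond_exp M (F s) (\<lambda>\<omega>. C * X' \<omega>) \<omega>"
      by (rule Ss.real_cond_exp_cong[OF b7]) (use X'm in simp_all)
    have b10: "AE \<omega> in M. real_cond_exp M (F s) (\<lambda>\<omega>. C * X' \<omega>) \<omega> = C * real_cond_exp M (F s) X' \<omega>"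
      by (rule Ss.real_cond_exp_cmult[OF X'i])
    have fe: "exp (- frm N \<Lambda> T) = C * exp (- frm N \<Lambda> T')"
      unfolding frm_eq C_def by (simp add: exp_add[symmetric])
    show "AE \<omega> in M. real_cond_exp M (F s) (\<lambda>\<omega>. exp (- (\<Sum>i\<in>N. K i (T i) \<omega>))) \<omega>
       = exp (- frm N \<Lambda> T) * \<eta> N s \<omega>"
      unfolding fe X_def[symmetric] using b8 b9 b10 IH unfolding X'_def[symmetric]
      by eventually_elim (simp add: mult.assoc)
  qed
qed


lemma hit:
  assumes T0: "0 \<le> T0" and i: "i \<in> N" and w: "\<omega> \<in> space M"
  shows "(ereal T0 < hitting_time (K i) (\<Theta> i) \<omega>) \<longleftrightarrow> K i T0 \<omega> < \<Theta> i \<omega>"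
proof
  define Q where "Q = {ereal t | t. 0 \<le> t \<and> \<Theta> i \<omega> \<le> K i t \<omega>}"
  have hd: "hitting_time (K i) (\<Theta> i) \<omega> = Inf Q" unfolding Q_def hitting_time_def by simp
  have mo: "mono_on {0..} (\<lambda>s. K i s \<omega>)" using K_mono i w by blast
  have cad: "cadlag (\<lambda>s. K i s \<omega>)" using K_cadlag i w by blast
  show "K i T0 \<omega> < \<Theta> i \<omega>" if lt: "ereal T0 < hitting_time (K i) (\<Theta> i) \<omega>"
  proof (rule ccontr)
    assume "\<not> K i T0 \<omega> < \<Theta> i \<omega>"
    then have "ereal T0 \<in> Q" unfolding Q_def using T0 by auto
    then have "Inf Q \<le> ereal T0" by (rule Inf_lower)
    then show False using lt hd by simp
  qed
  show "ereal T0 < hitting_time (K i) (\<Theta> i) \<omega>" if lt: "K i T0 \<omega> < \<Theta> i \<omega>"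
  proof -
    have "((\<lambda>s. K i s \<omega>) \<longlongrightarrow> K i T0 \<omega>) (at_right T0)" using cad T0 unfolding cadlag_def by blast
    then have "eventually (\<lambda>s. K i s \<omega> < \<Theta> i \<omega>) (at_right T0)" using lt by (rule order_tendstoD(2))
    then obtain b where b: "b > T0" "\<And>s. s > T0 \<Longrightarrow> s < b \<Longrightarrow> K i s \<omega> < \<Theta> i \<omega>"
      unfolding eventually_at_right_field by blast
    have "ereal b \<le> Inf Q"
    proof (rule Inf_greatest)
      fix q assume "q \<in> Q"
      then obtain s where s: "q = ereal s" "0 \<le> s" "\<Theta> i \<omega> \<le> K i s \<omega>" unfolding Q_def by blast
      show "ereal b \<le> q"
      proof (rule ccontr)
        assume "\<not> ereal b \<le> q"
        then have sb: "s < b" using s by simp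
        show False
        proof (cases "s \<le> T0")
          case True
          have "K i s \<omega> \<le> K i T0 \<omega>" by (rule mono_onD[OF mo]) (use True s T0 in auto)
          then show False using s lt by simp
        next
          case False
          then show False using b(2)[of s] sb s by simp
        qed
      qed
    qed
    moreover have "ereal T0 < ereal b" using b(1) by simp
    ultimately have "ereal T0 < Inf Q" by (rule less_le_trans[rotated])
    then show ?thesis using hd by simp
  qed
qed

lemma ptail:
  assumes i: "i \<in> N"
  shows "prob {\<omega> \<in> space M. k < \<Theta> i \<omega>} = exp (- max k 0)"
proof (cases "0 \<le> k")
  case True
  have "\<P>(x in M. k < \<Theta> i x) = exp (- k * 1)"
    by (rule exponential_distributedD_gt) (use Theta_exp i True in auto)
  then show ?thesis using True by simp
next
  case False
  have "\<Theta> i \<in> measurable M lborel" by (rule distributed_measurable) (use Theta_exp i in blast)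
  then have Tm[measurable]: "\<Theta> i \<in> borel_measurable M" by simp
  have ev: "{\<omega> \<in> space M. k < \<Theta> i \<omega>} \<in> events" by measurable
  have "\<P>(x in M. 0 < \<Theta> i x) = exp (- 0 * 1)"
    by (rule exponential_distributedD_gt) (use Theta_exp i in auto)
  then have p0: "prob {\<omega> \<in> space M. 0 < \<Theta> i \<omega>} = 1" by simp
  have "prob {\<omega> \<in> space M. 0 < \<Theta> i \<omega>} \<le> prob {\<omega> \<in> space M. k < \<Theta> i \<omega>}"
    by (rule finite_measure_mono[OF _ ev]) (use False in auto)
  then have "prob {\<omega> \<in> space M. k < \<Theta> i \<omega>} = 1" using p0 prob_le_1 by (metis antisym)
  then show ?thesis using False by simp
qed


definition "Finf = filtration_infty M F"

lemma gen_sub: "(\<Union>s\<in>{0..}. sets (F s)) \<subseteq> Pow (space M)"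
proof -
  have "\<And>s. 0 \<le> s \<Longrightarrow> sets (F s) \<subseteq> sets M" using subalg unfolding subalgebra_def by blast
  then show ?thesis using sets.space_closed[of M] by blast
qed

lemma space_Finf: "space Finf = space M"
  unfolding Finf_def filtration_infty_def by (simp add: space_measure_of_conv)

lemma sets_Finf: "sets Finf = sigma_sets (space M) (\<Union>s\<in>{0..}. sets (F s))"
  unfolding Finf_def filtration_infty_def by (rule sets_measure_of[OF gen_sub])

lemma FsFinf: "0 \<le> s \<Longrightarrow> sets (F s) \<subseteq> sets Finf"
  unfolding sets_Finf by (auto intro: sigma_sets.Basic)

lemma FinfM: "sets Finf \<subseteq> sets M"
proof -
  have "(\<Union>s\<in>{0..}. sets (F s)) \<subseteq> sets M" using subalg unfolding subalgebra_def by auto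
  then show ?thesis unfolding sets_Finf by (rule sets.sigma_sets_subset)
qed

lemma subMF: "subalgebra M Finf" unfolding subalgebra_def using space_Finf FinfM by simp

lemma subFF: "0 \<le> s \<Longrightarrow> subalgebra Finf (F s)"
  unfolding subalgebra_def using space_F space_Finf FsFinf by simp

definition "Th' = (\<lambda>i. if i \<in> N then \<Theta> i else (\<lambda>_. 0::real))"

lemma Thm: "i \<in> N \<Longrightarrow> \<Theta> i \<in> borel_measurable M"
proof -
  assume i: "i \<in> N"
  have "\<Theta> i \<in> measurable M lborel" by (rule distributed_measurable) (use Theta_exp i in blast)
  then show ?thesis by simp
qed

lemma Th'm: "Th' i \<in> borel_measurable M"
  unfolding Th'_def using Thm by auto

definition "EE = (\<lambda>j. case j of None \<Rightarrow> sets (filtration_infty M F)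
                | Some i \<Rightarrow> {\<Theta> i -` B \<inter> space M | B. B \<in> sets borel})"

lemma ind0: "indep_sets EE (insert None (Some ` N))"
  using Theta_indep unfolding EE_def .

lemma Int_stable_Th: "Int_stable {\<Theta> i -` B \<inter> space M | B. B \<in> sets borel}"
  unfolding Int_stable_def
proof (intro ballI)
  fix a b assume "a \<in> {\<Theta> i -` B \<inter> space M | B. B \<in> sets borel}" "b \<in> {\<Theta> i -` B \<inter> space M | B. B \<in> sets borel}"
  then obtain B1 B2 where B: "a = \<Theta> i -` B1 \<inter> space M" "B1 \<in> sets borel" "b = \<Theta> i -` B2 \<inter> space M" "B2 \<in> sets borel"
    by blast
  then have "a \<inter> b = \<Theta> i -` (B1 \<inter> B2) \<inter> space M" by auto
  moreover have "B1 \<inter> B2 \<in> sets borel" using B by auto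
  ultimately show "a \<inter> b \<in> {\<Theta> i -` B \<inter> space M | B. B \<in> sets borel}" by blast
qed

definition "IJ = (\<lambda>b::bool. if b then {None} else Some ` N)"

lemma ind1: "indep_sets (\<lambda>b. sigma_sets (space M) (\<Union>j\<in>IJ b. EE j)) UNIV"
proof (rule indep_sets_collect_sigma)
  have "(\<Union>b\<in>UNIV. IJ b) = insert None (Some ` N)" unfolding IJ_def UNIV_bool by auto
  then show "indep_sets EE (\<Union>b\<in>UNIV. IJ b)" using ind0 by simp
  show "Int_stable (EE j)" if "b \<in> UNIV" "j \<in> IJ b" for j b
  proof (cases j)
    case None
    then show ?thesis unfolding EE_def Int_stable_def by auto
  next
    case (Some i)
    then show ?thesis unfolding EE_def using Int_stable_Th by simp
  qed
  show "disjoint_family_on IJ UNIV" unfolding disjoint_family_on_def IJ_def by auto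
qed

lemma indTh: "indep_vars (\<lambda>_. borel) Th' N"
  unfolding indep_vars_def2
proof
  show "\<forall>i\<in>N. random_variable borel (Th' i)" using Th'm by blast
  show "indep_sets (\<lambda>i. {Th' i -` A \<inter> space M |A. A \<in> sets borel}) N"
  proof (rule indep_setsI)
    fix i assume "i \<in> N"
    show "{Th' i -` A \<inter> space M |A. A \<in> sets borel} \<subseteq> events"
      using Th'm[of i] by (auto intro: measurable_sets)
  next
    fix A :: "nat \<Rightarrow> 'a set" and J
    assume J: "J \<noteq> {}" "J \<subseteq> N" "finite J" and AJ: "\<forall>j\<in>J. A j \<in> {Th' j -` A \<inter> space M |A. A \<in> sets borel}"
    have "prob (\<Inter>j\<in>Some ` J. A (the j)) = (\<Prod>j\<in>Some ` J. prob (A (the j)))"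
    proof (rule indep_setsD[OF ind0])
      show "Some ` J \<subseteq> insert None (Some ` N)" using J by auto
      show "Some ` J \<noteq> {}" using J by auto
      show "finite (Some ` J)" using J by auto
      show "\<forall>j\<in>Some ` J. A (the j) \<in> EE j"
      proof
        fix j assume "j \<in> Some ` J"
        then obtain i where i: "j = Some i" "i \<in> J" by auto
        then have "i \<in> N" using J by auto
        then have "Th' i = \<Theta> i" unfolding Th'_def by simp
        moreover have "A i \<in> {Th' i -` A \<inter> space M |A. A \<in> sets borel}" using AJ i by blast
        ultimately have "A i \<in> {\<Theta> i -` B \<inter> space M | B. B \<in> sets borel}" by simp
        then show "A (the j) \<in> EE j" using i unfolding EE_def by simp
      qed
    qed
    moreover have "(\<Inter>j\<in>Some ` J. A (the j)) = (\<Inter>j\<in>J. A j)" by auto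
    moreover have "(\<Prod>j\<in>Some ` J. prob (A (the j))) = (\<Prod>j\<in>J. prob (A j))"
      by (subst prod.reindex) auto
    ultimately show "prob (\<Inter>j\<in>J. A j) = (\<Prod>j\<in>J. prob (A j))" by simp
  qed
qed


lemma indep_part:
  fixes T :: "nat \<Rightarrow> real" and A :: "'a set"
  assumes t0: "0 \<le> t" and Tt: "\<forall>i\<in>N. t \<le> T i" and A: "A \<in> sets (F t)"
  shows "(\<integral>\<omega>. indicator A \<omega> * indicator {\<omega>\<in>space M. \<forall>i\<in>N. K i (T i) \<omega> < \<Theta> i \<omega>} \<omega> \<partial>M)
       = (\<integral>\<omega>. indicator A \<omega> * exp (- (\<Sum>i\<in>N. K i (T i) \<omega>)) \<partial>M)"
proof -
  have T0: "\<And>i. i \<in> N \<Longrightarrow> 0 \<le> T i"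
  proof -
    fix i assume "i \<in> N"
    then have "t \<le> T i" using Tt by blast
    then show "0 \<le> T i" using t0 by linarith
  qed
  define S1 :: "(nat \<Rightarrow> real) measure" where "S1 = (\<Pi>\<^sub>M i\<in>insert 0 N. borel)"
  define S2 :: "(nat \<Rightarrow> real) measure" where "S2 = (\<Pi>\<^sub>M i\<in>N. borel)"
  define V1 where "V1 = (\<lambda>\<omega>. \<lambda>i\<in>insert 0 N. if i = 0 then indicator A \<omega> else K i (T i) \<omega>)"
  define V2 where "V2 = (\<lambda>\<omega>. \<lambda>i\<in>N. Th' i \<omega>)"
  have AFinf: "A \<in> sets Finf" using FsFinf[OF t0] A by blast
  have KF: "\<And>i. i \<in> N \<Longrightarrow> K i (T i) \<in> borel_measurable Finf"
    using measurable_from_subalg[OF subFF Kmeas] T0 by blast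
  have V1F: "V1 \<in> measurable Finf S1" unfolding V1_def S1_def
  proof (rule measurable_restrict)
    fix i assume i: "i \<in> insert 0 N"
    show "(\<lambda>\<omega>. if i = 0 then indicator A \<omega> else K i (T i) \<omega>) \<in> borel_measurable Finf"
    proof (cases "i = 0")
      case True then show ?thesis using AFinf by simp
    next
      case False then show ?thesis using KF i by simp
    qed
  qed
  have V1M: "V1 \<in> measurable M S1" by (rule measurable_from_subalg[OF subMF V1F])
  have V2M: "V2 \<in> measurable M S2" unfolding V2_def S2_def by (rule measurable_restrict) (rule Th'm)
  have indV: "indep_var S1 V1 S2 V2"
    unfolding indep_var_def indep_vars_def2
  proof
    show "\<forall>b\<in>UNIV. random_variable (case_bool S1 S2 b) (case_bool V1 V2 b)"
      using V1M V2M by (simp add: UNIV_bool)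
    show "indep_sets (\<lambda>b. {case_bool V1 V2 b -` B \<inter> space M |B. B \<in> sets (case_bool S1 S2 b)}) UNIV"
    proof (rule indep_sets_mono_sets[OF ind1])
      fix b :: bool assume "b \<in> UNIV"
      show "{case_bool V1 V2 b -` B \<inter> space M |B. B \<in> sets (case_bool S1 S2 b)} \<subseteq> sigma_sets (space M) (\<Union>j\<in>IJ b. EE j)"
      proof (cases b)
        case True
        have "V1 -` B \<inter> space M \<in> sets Finf" if "B \<in> sets S1" for B
          using measurable_sets[OF V1F that] space_Finf by simp
        then show ?thesis using True unfolding IJ_def EE_def Finf_def by (auto intro: sigma_sets.Basic)
      next
        case False
        define G where "G = sigma (space M) (\<Union>j\<in>Some ` N. EE j)"
        have genG: "(\<Union>j\<in>Some ` N. EE j) \<subseteq> Pow (space M)" unfolding EE_def by auto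
        have spG: "space G = space M" unfolding G_def by (simp add: space_measure_of_conv)
        have setsG: "sets G = sigma_sets (space M) (\<Union>j\<in>Some ` N. EE j)" unfolding G_def
          by (rule sets_measure_of[OF genG])
        have V2G: "V2 \<in> measurable G S2" unfolding V2_def S2_def
        proof (rule measurable_restrict)
          fix i assume i: "i \<in> N"
          show "Th' i \<in> borel_measurable G"
          proof (rule measurableI)
            fix B :: "real set" assume B: "B \<in> sets borel"
            have "Th' i -` B \<inter> space G = \<Theta> i -` B \<inter> space M" using i spG unfolding Th'_def by simp
            moreover have "\<Theta> i -` B \<inter> space M \<in> (\<Union>j\<in>Some ` N. EE j)"
            proof -
              have "\<Theta> i -` B \<inter> space M \<in> EE (Some i)" using B unfolding EE_def by auto
              then show ?thesis using i by blast
            qed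
            ultimately show "Th' i -` B \<inter> space G \<in> sets G" unfolding setsG by (auto intro: sigma_sets.Basic)
          qed simp
        qed
        have "V2 -` B \<inter> space M \<in> sigma_sets (space M) (\<Union>j\<in>Some ` N. EE j)" if "B \<in> sets S2" for B
          using measurable_sets[OF V2G that] spG setsG by simp
        then show ?thesis using False unfolding IJ_def by auto
      qed
    qed
  qed
  define D1 where "D1 = distr M S1 V1"
  define D2 where "D2 = distr M S2 V2"
  have dist: "D1 \<Otimes>\<^sub>M D2 = distr M (S1 \<Otimes>\<^sub>M S2) (\<lambda>x. (V1 x, V2 x))"
    using indV indep_var_distribution_eq unfolding D1_def D2_def by blast
  have dist2: "D2 = (\<Pi>\<^sub>M i\<in>N. distr M borel (Th' i))"
    using indep_vars_iff_distr_eq_PiM[where I=N and M'="\<lambda>_. borel" and X=Th'] N_ne Th'm indTh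
    unfolding D2_def V2_def S2_def by simp
  interpret D1: prob_space D1 unfolding D1_def by (rule prob_space_distr[OF V1M])
  interpret D2: prob_space D2 unfolding D2_def by (rule prob_space_distr[OF V2M])
  interpret P: pair_prob_space D1 D2 ..
  interpret PP: product_sigma_finite "\<lambda>i. distr M borel (Th' i)"
    unfolding product_sigma_finite_def
    using prob_space_distr[OF Th'm] prob_space_imp_sigma_finite by blast
  define \<phi> where "\<phi> = (\<lambda>a::real. max 0 (min a 1))"
  have \<phi>bd: "\<And>a. \<bar>\<phi> a\<bar> \<le> 1" unfolding \<phi>_def by auto
  have \<phi>ind: "\<And>\<omega>. \<phi> (indicator A \<omega>) = indicator A \<omega>" unfolding \<phi>_def by (simp add: indicator_def)
  define g where "g = (\<lambda>z::(nat \<Rightarrow> real) \<times> (nat \<Rightarrow> real).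
      \<phi> (fst z 0) * (\<Prod>i\<in>N. if fst z i < snd z i then 1 else (0::real)))"
  define h where "h = (\<lambda>x::nat \<Rightarrow> real. \<phi> (x 0) * (\<Prod>i\<in>N. exp (- max (x i) 0)))"
  have gm: "g \<in> borel_measurable (S1 \<Otimes>\<^sub>M S2)" unfolding g_def S1_def S2_def \<phi>_def by measurable
  have hm: "h \<in> borel_measurable S1" unfolding h_def S1_def \<phi>_def by measurable
  have pm: "(\<lambda>x. (V1 x, V2 x)) \<in> measurable M (S1 \<Otimes>\<^sub>M S2)" using V1M V2M by (rule measurable_Pair)
  have gm2: "g \<in> borel_measurable (D1 \<Otimes>\<^sub>M D2)" unfolding dist using gm by simp
  have gbd: "\<And>z. norm (g z) \<le> 1"
  proof -
    fix z :: "(nat \<Rightarrow> real) \<times> (nat \<Rightarrow> real)"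
    have p0: "0 \<le> (\<Prod>i\<in>N. if fst z i < snd z i then 1 else (0::real))" by (rule prod_nonneg) simp
    have p1: "(\<Prod>i\<in>N. if fst z i < snd z i then 1 else (0::real)) \<le> 1" by (rule prod_le_1) simp
    have "\<bar>g z\<bar> = \<bar>\<phi> (fst z 0)\<bar> * \<bar>\<Prod>i\<in>N. if fst z i < snd z i then 1 else (0::real)\<bar>"
      unfolding g_def by (simp add: abs_mult)
    also have "\<dots> \<le> 1 * 1" using p0 p1 \<phi>bd by (intro mult_mono) auto
    finally show "norm (g z) \<le> 1" by simp
  qed
  have fm: "finite_measure (D1 \<Otimes>\<^sub>M D2)"
    using prob_space_pair[OF D1.prob_space_axioms D2.prob_space_axioms] unfolding prob_space_def by blast
  have gint: "integrable (D1 \<Otimes>\<^sub>M D2) g"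
  proof (rule finite_measure.integrable_const_bound[OF fm, where B=1])
    show "AE x in D1 \<Otimes>\<^sub>M D2. norm (g x) \<le> 1" by (rule AE_I2) (rule gbd)
  qed (rule gm2)
  define E where "E = {\<omega>\<in>space M. \<forall>i\<in>N. K i (T i) \<omega> < \<Theta> i \<omega>}"
  have e1: "(\<integral>\<omega>. indicator A \<omega> * indicator E \<omega> \<partial>M) = (\<integral>\<omega>. g (V1 \<omega>, V2 \<omega>) \<partial>M)"
  proof (rule Bochner_Integration.integral_cong[OF refl])
    fix \<omega> assume w: "\<omega> \<in> space M"
    have pe: "(\<Prod>i\<in>N. if K i (T i) \<omega> < Th' i \<omega> then 1 else (0::real)) = indicator E \<omega>"
    proof (cases "\<forall>i\<in>N. K i (T i) \<omega> < \<Theta> i \<omega>")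
      case True
      then have "(\<Prod>i\<in>N. if K i (T i) \<omega> < Th' i \<omega> then 1 else (0::real)) = (\<Prod>i\<in>N. 1)"
        unfolding Th'_def by (intro prod.cong) auto
      then show ?thesis using True w unfolding E_def by simp
    next
      case False
      then obtain j where j: "j \<in> N" "\<not> K j (T j) \<omega> < \<Theta> j \<omega>" by blast
      have "(\<Prod>i\<in>N. if K i (T i) \<omega> < Th' i \<omega> then 1 else (0::real)) = 0"
        by (rule prod_zero) (use j N_fin in \<open>auto simp: Th'_def\<close>)
      moreover have "\<omega> \<notin> E" using j unfolding E_def by auto
      ultimately show ?thesis by simp
    qed
    have "g (V1 \<omega>, V2 \<omega>) = indicator A \<omega> * (\<Prod>i\<in>N. if K i (T i) \<omega> < Th' i \<omega> then 1 else (0::real))"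
    proof -
      have "(\<Prod>i\<in>N. if V1 \<omega> i < V2 \<omega> i then 1 else (0::real)) = (\<Prod>i\<in>N. if K i (T i) \<omega> < Th' i \<omega> then 1 else (0::real))"
        by (rule prod.cong[OF refl]) (simp add: V1_def V2_def)
      moreover have "V1 \<omega> 0 = indicator A \<omega>" unfolding V1_def by simp
      ultimately show ?thesis unfolding g_def by (simp add: \<phi>ind)
    qed
    then show "indicator A \<omega> * indicator E \<omega> = g (V1 \<omega>, V2 \<omega>)" using pe by simp
  qed
  have e2: "(\<integral>\<omega>. g (V1 \<omega>, V2 \<omega>) \<partial>M) = (\<integral>z. g z \<partial>(D1 \<Otimes>\<^sub>M D2))"
    unfolding dist by (rule integral_distr[symmetric, OF pm gm])
  have e3: "(\<integral>z. g z \<partial>(D1 \<Otimes>\<^sub>M D2)) = (\<integral>x. (\<integral>y. g (x, y) \<partial>D2) \<partial>D1)"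
    by (rule P.integral_fst'[OF gint, symmetric])
  have inner: "(\<integral>y. g (x, y) \<partial>D2) = h x" for x
  proof -
    define f where "f = (\<lambda>i (\<theta>::real). if x i < \<theta> then 1 else (0::real))"
    have fint: "integrable (distr M borel (Th' i)) (f i)" for i
    proof -
      interpret Di: prob_space "distr M borel (Th' i)" by (rule prob_space_distr[OF Th'm])
      show ?thesis by (rule Di.integrable_const_bound[where B=1]) (auto simp: f_def)
    qed
    have fval: "integral\<^sup>L (distr M borel (Th' i)) (f i) = exp (- max (x i) 0)" if i: "i \<in> N" for i
    proof -
      have "integral\<^sup>L (distr M borel (Th' i)) (f i) = (\<integral>\<omega>. f i (Th' i \<omega>) \<partial>M)"
        by (rule integral_distr[OF Th'm]) (auto simp: f_def)
      also have "\<dots> = (\<integral>\<omega>. indicator {\<omega>\<in>space M. x i < \<Theta> i \<omega>} \<omega> \<partial>M)"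
        by (rule Bochner_Integration.integral_cong[OF refl]) (use i in \<open>auto simp: f_def Th'_def indicator_def\<close>)
      also have "\<dots> = prob {\<omega>\<in>space M. x i < \<Theta> i \<omega>}"
        by (simp add: Int_absorb2 subset_iff)
      also have "\<dots> = exp (- max (x i) 0)" by (rule ptail[OF i])
      finally show ?thesis .
    qed
    have "(\<integral>y. g (x, y) \<partial>D2) = (\<integral>y. \<phi> (x 0) * (\<Prod>i\<in>N. f i (y i)) \<partial>(\<Pi>\<^sub>M i\<in>N. distr M borel (Th' i)))"
      unfolding dist2 g_def f_def by simp
    also have "\<dots> = \<phi> (x 0) * (\<integral>y. (\<Prod>i\<in>N. f i (y i)) \<partial>(\<Pi>\<^sub>M i\<in>N. distr M borel (Th' i)))"
      by simp
    also have "(\<integral>y. (\<Prod>i\<in>N. f i (y i)) \<partial>(\<Pi>\<^sub>M i\<in>N. distr M borel (Th' i))) = (\<Prod>i\<in>N. integral\<^sup>L (distr M borel (Th' i)) (f i))"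
      by (rule PP.product_integral_prod[OF N_fin fint])
    also have "\<dots> = (\<Prod>i\<in>N. exp (- max (x i) 0))" by (rule prod.cong[OF refl]) (rule fval)
    finally show ?thesis unfolding h_def .
  qed
  have e4: "(\<integral>x. (\<integral>y. g (x, y) \<partial>D2) \<partial>D1) = (\<integral>x. h x \<partial>D1)" by (simp add: inner)
  have e5: "(\<integral>x. h x \<partial>D1) = (\<integral>\<omega>. h (V1 \<omega>) \<partial>M)" unfolding D1_def by (rule integral_distr[OF V1M hm])
  have e6: "(\<integral>\<omega>. h (V1 \<omega>) \<partial>M) = (\<integral>\<omega>. indicator A \<omega> * exp (- (\<Sum>i\<in>N. K i (T i) \<omega>)) \<partial>M)"
  proof (rule Bochner_Integration.integral_cong[OF refl])
    fix \<omega> assume w: "\<omega> \<in> space M"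
    have "(\<Prod>i\<in>N. exp (- max (V1 \<omega> i) 0)) = (\<Prod>i\<in>N. exp (- K i (T i) \<omega>))"
      using Kpos T0 w unfolding V1_def by (intro prod.cong) auto
    also have "\<dots> = exp (- (\<Sum>i\<in>N. K i (T i) \<omega>))" by (simp add: exp_sum sum_negf[symmetric])
    finally show "h (V1 \<omega>) = indicator A \<omega> * exp (- (\<Sum>i\<in>N. K i (T i) \<omega>))"
      unfolding h_def V1_def by (simp add: \<phi>ind)
  qed
  show ?thesis using e1 e2 e3 e4 e5 e6 unfolding E_def by simp
qed


lemma final:
  fixes t :: real and T :: "nat \<Rightarrow> real"
  assumes t0: "t \<ge> 0" and Tt: "\<forall>i\<in>N. T i \<ge> t"
  shows "AE \<omega> in M.
     real_cond_exp M (F t)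
       (indicator {\<omega>\<in>space M. \<forall>i\<in>N. hitting_time (K i) (\<Theta> i) \<omega> > ereal (T i)}) \<omega>
     = exp (- frm N \<Lambda> T) * \<eta> N t \<omega>"
proof -
  have T0: "\<And>i. i \<in> N \<Longrightarrow> 0 \<le> T i"
  proof -
    fix i assume "i \<in> N"
    then have "t \<le> T i" using Tt by blast
    then show "0 \<le> T i" using t0 by linarith
  qed
  define E where "E = {\<omega>\<in>space M. \<forall>i\<in>N. K i (T i) \<omega> < \<Theta> i \<omega>}"
  have Eeq: "{\<omega>\<in>space M. \<forall>i\<in>N. hitting_time (K i) (\<Theta> i) \<omega> > ereal (T i)} = E"
    unfolding E_def using hit T0 by auto
  have Eint: "E = (\<Inter>i\<in>N. {\<omega>\<in>space M. K i (T i) \<omega> < \<Theta> i \<omega>})" unfolding E_def using N_ne by auto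
  have Em: "E \<in> sets M" unfolding Eint
  proof (rule sets.finite_INT[OF N_fin N_ne])
    fix i assume i: "i \<in> N"
    have [measurable]: "K i (T i) \<in> borel_measurable M" using KmeasM i T0 by blast
    have [measurable]: "\<Theta> i \<in> borel_measurable M" using Thm i by blast
    show "{\<omega>\<in>space M. K i (T i) \<omega> < \<Theta> i \<omega>} \<in> sets M" by measurable
  qed
  interpret St: sigma_finite_subalgebra M "F t" using sfs t0 by simp
  define X where "X = (\<lambda>\<omega>. exp (- (\<Sum>i\<in>N. K i (T i) \<omega>)))"
  have Xi: "integrable M X" unfolding X_def by (rule expK_int) (use T0 in auto)
  have c1: "AE \<omega> in M. real_cond_exp M (F t) (indicator E) \<omega> = real_cond_exp M (F t) X \<omega>"
  proof (rule St.real_cond_exp_charact)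
    fix A assume A: "A \<in> sets (F t)"
    have "(\<integral>\<omega>\<in>A. (indicator E \<omega> :: real) \<partial>M) = (\<integral>\<omega>. indicator A \<omega> * indicator E \<omega> \<partial>M)"
      unfolding set_lebesgue_integral_def by simp
    also have "\<dots> = (\<integral>\<omega>. indicator A \<omega> * X \<omega> \<partial>M)"
      unfolding E_def X_def by (rule indep_part[OF t0 _ A]) (use Tt in auto)
    also have "\<dots> = (\<integral>\<omega>\<in>A. X \<omega> \<partial>M)" unfolding set_lebesgue_integral_def by simp
    also have "\<dots> = (\<integral>\<omega>\<in>A. real_cond_exp M (F t) X \<omega> \<partial>M)" by (rule St.real_cond_exp_intA[OF Xi A])
    finally show "(\<integral>\<omega>\<in>A. (indicator E \<omega> :: real) \<partial>M) = (\<integral>\<omega>\<in>A. real_cond_exp M (F t) X \<omega> \<partial>M)" .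
  next
    show "integrable M (indicator E :: 'a \<Rightarrow> real)"
      by (rule intb[where B=1]) (use Em in \<open>auto simp: indicator_def\<close>)
  next
    show "integrable M (real_cond_exp M (F t) X)" by (rule St.real_cond_exp_int(1)[OF Xi])
  next
    show "real_cond_exp M (F t) X \<in> borel_measurable (F t)" by (rule borel_measurable_cond_exp)
  qed
  have cpos: "card (T ` N) = Suc (card (T ` N) - 1)"
  proof -
    have "card (T ` N) > 0" using N_fin N_ne by (simp add: card_gt_0_iff)
    then show ?thesis by simp
  qed
  have c2: "AE \<omega> in M. real_cond_exp M (F t) X \<omega> = exp (- frm N \<Lambda> T) * \<eta> N t \<omega>"
    using main_ind[of "card (T ` N) - 1"] t0 Tt cpos unfolding X_def by blast
  show ?thesis unfolding Eeq using c1 c2 by eventually_elim simp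
qed

end

theorem corollary4p2:
  fixes M :: "'a measure" and F :: "real \<Rightarrow> 'a measure" and n :: nat
    and K :: "nat \<Rightarrow> real \<Rightarrow> 'a \<Rightarrow> real" and \<Theta> :: "nat \<Rightarrow> 'a \<Rightarrow> real"
    and \<Lambda> :: "nat set \<Rightarrow> real \<Rightarrow> real" and \<eta> :: "nat set \<Rightarrow> real \<Rightarrow> 'a \<Rightarrow> real"
    and t :: real and T :: "nat \<Rightarrow> real"
  assumes "prob_space M"
    and "usual_filtration M F"
    and "n \<ge> 1"
    and K_adapted: "\<forall>i\<in>{1..n}. adapted_proc F (K i)"
    and K_cadlag: "\<forall>i\<in>{1..n}. \<forall>\<omega>\<in>space M. cadlag (\<lambda>s. K i s \<omega>)"
    and K_mono: "\<forall>i\<in>{1..n}. \<forall>\<omega>\<in>space M. mono_on {0..} (\<lambda>s. K i s \<omega>)"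
    and K_zero: "\<forall>i\<in>{1..n}. \<forall>\<omega>\<in>space M. K i 0 \<omega> = 0"
    and Theta_exp: "\<forall>i\<in>{1..n}. distributed M lborel (\<Theta> i) (exponential_density 1)"
    and Theta_indep: "prob_space.indep_sets M
        (\<lambda>j. case j of None \<Rightarrow> sets (filtration_infty M F)
                | Some i \<Rightarrow> {\<Theta> i -` B \<inter> space M | B. B \<in> sets borel})
        (insert None (Some ` {1..n}))"
    and Lambda_empty: "\<forall>s. \<Lambda> {} s = 0"
    and Lambda_cont: "\<forall>J. J \<subseteq> {1..n} \<longrightarrow> J \<noteq> {} \<longrightarrow> continuous_on {0..} (\<Lambda> J)"
    and eta_fact: "\<forall>J. J \<subseteq> {1..n} \<longrightarrow> J \<noteq> {} \<longrightarrow> (\<forall>s\<ge>0. \<forall>\<omega>\<in>space M.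
        exp (- (\<Sum>j\<in>J. K j s \<omega>)) = \<eta> J s \<omega> * exp (- \<Lambda> J s))"
    and eta_mart: "\<forall>J. J \<subseteq> {1..n} \<longrightarrow> J \<noteq> {} \<longrightarrow>
        martingale M F (\<eta> J) \<and> (\<forall>s\<ge>0. \<forall>\<omega>\<in>space M. \<eta> J s \<omega> \<ge> 0) \<and>
        (\<forall>\<omega>\<in>space M. \<eta> J 0 \<omega> = 1)"
    and "t \<ge> 0"
    and "\<forall>i\<in>{1..n}. T i \<ge> t"
  shows "AE \<omega> in M.
     real_cond_exp M (F t)
       (indicator {\<omega>\<in>space M. \<forall>i\<in>{1..n}. hitting_time (K i) (\<Theta> i) \<omega> > ereal (T i)}) \<omega>
     = exp (- (\<Sum>J\<in>{J. J \<subseteq> {1..n} \<and> J \<noteq> {}}. \<Sum>I\<in>Pow J.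
          (-1) ^ (card J - card I + 1) * \<Lambda> ({1..n} - I) (Max (T ` J))))
       * \<eta> {1..n} t \<omega>"
proof -
  interpret cs M F n K \<Theta> \<Lambda> \<eta>
    by (rule cs.intro) (rule assms)+
  have "AE \<omega> in M.
     real_cond_exp M (F t)
       (indicator {\<omega>\<in>space M. \<forall>i\<in>{1..n}. hitting_time (K i) (\<Theta> i) \<omega> > ereal (T i)}) \<omega>
     = exp (- frm {1..n} \<Lambda> T) * \<eta> {1..n} t \<omega>"
    by (rule final) (rule assms)+
  then show ?thesis unfolding frm_def .
qed

end
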